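(* Let $G$ be a maximal outerplanar graph with at least four vertices. Let $uv$ be an edge on its outer face with $\deg_G(u)>2$ and $\deg_G(v)>2$, let $w=\Delta(uv)$, and let $G_u=G_u(uv)$ and $G_v=G_v(uv)$ be the $uv$-segments. If $\mathrm{mvc}(G)=\mathrm{mvc}(G_u)+\mathrm{mvc}(G_v)-1$, then $$\mathrm{mvc}_u(G)=\mathrm{mvc}_{uw}(G_u)+\mathrm{mvc}(G_v)-1,\quad \mathrm{mvc}_v(G)=\mathrm{mvc}(G_u)+\mathrm{mvc}_{vw}(G_v)-1,$$ $$\mathrm{mvc}_{uv}(G)=\mathrm{mvc}_{uw}(G_u)+\mathrm{mvc}_{vw}(G_v)-1.$$
   Context: All graphs are finite and simple. A maximal outerplanar graph is an outerplanar graph to which no edge between existing vertices can be added while keeping it outerplanar. A fixed outerplanar embedding, with all vertices on the outer face, is assumed. For $S\subseteq V(G)$, $\mathrm{mvc}_S(G)$ is the minimum size of a vertex cover of $G$ containing $S$, and $\mathrm{mvc}(G)=\mathrm{mvc}_\emptyset(G)$. Braces are dropped for small sets, e.g. $\mathrm{mvc}_{uw}(G)=\mathrm{mvc}_{\{u,w\}}(G)$. For an edge $uv$ on the outer face of a maximal outerplanar graph with at least three vertices, $\Delta(uv)$ is the unique common neighbor of $u$ and $v$. $uv$-segments: let $w=\Delta(uv)$. $G_u(uv)$ is the maximal biconnected outerplanar subgraph of $G$ that has $uw$ on its outer face and does not contain $v$. Equivalently, it is the subgraph induced by $u$, $w$ and the vertices on the side of edge $uw$ not containing $v$; it is the single edge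 $uw$ if $\deg_G(u)=2$. $G_v(uv)$ is defined symmetrically. *)

theory Defs
  imports Main
begin

definition graph :: "'a set \<Rightarrow> 'a set set \<Rightarrow> bool" where
  "graph V E \<longleftrightarrow> finite V \<and> (\<forall>e\<in>E. \<exists>x y. x \<noteq> y \<and> e = {x, y} \<and> x \<in> V \<and> y \<in> V)"

definition deg :: "'a set \<Rightarrow> 'a set set \<Rightarrow> 'a \<Rightarrow> nat" where
  "deg V E x = card {y \<in> V. {x, y} \<in> E}"

text \<open>An outerplanar embedding: the vertices placed on a circle in the cyclic order
  f 0, f 1, ..., f (n-1), with edges drawn as non-crossing chords.\<close>
definition outer_embedding :: "'a set \<Rightarrow> 'a set set \<Rightarrow> (nat \<Rightarrow> 'a) \<Rightarrow> bool" where
  "outer_embedding V E f \<longleftrightarrow>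
     bij_betw f {..<card V} V \<and>
     (\<forall>a b c d. a < c \<and> c < b \<and> b < d \<and> d < card V \<and> {f a, f b} \<in> E \<longrightarrow> {f c, f d} \<notin> E)"

definition outerplanar :: "'a set \<Rightarrow> 'a set set \<Rightarrow> bool" where
  "outerplanar V E \<longleftrightarrow> graph V E \<and> (\<exists>f. outer_embedding V E f)"

definition maximal_outerplanar :: "'a set \<Rightarrow> 'a set set \<Rightarrow> bool" where
  "maximal_outerplanar V E \<longleftrightarrow> outerplanar V E \<and>
     (\<forall>x\<in>V. \<forall>y\<in>V. x \<noteq> y \<and> {x, y} \<notin> E \<longrightarrow> \<not> outerplanar V (insert {x, y} E))"

definition outer_edge :: "'a set \<Rightarrow> 'a set set \<Rightarrow> (nat \<Rightarrow> 'a) \<Rightarrow> 'a \<Rightarrow> 'a \<Rightarrow> bool" where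
  "outer_edge V E f u v \<longleftrightarrow> {u, v} \<in> E \<and>
     (\<exists>i < card V. {u, v} = {f i, f (Suc i mod card V)})"

definition Delta :: "'a set set \<Rightarrow> 'a \<Rightarrow> 'a \<Rightarrow> 'a" where
  "Delta E u v = (THE w. {u, w} \<in> E \<and> {v, w} \<in> E)"

definition pos :: "'a set \<Rightarrow> (nat \<Rightarrow> 'a) \<Rightarrow> 'a \<Rightarrow> nat" where
  "pos V f x = inv_into {..<card V} f x"

text \<open>Vertices met going forward (cyclically) from a to b, both included.\<close>
definition fwd_arc :: "'a set \<Rightarrow> (nat \<Rightarrow> 'a) \<Rightarrow> 'a \<Rightarrow> 'a \<Rightarrow> 'a set" where
  "fwd_arc V f a b =
     {f ((pos V f a + k) mod card V) | k. k \<le> (pos V f b + card V - pos V f a) mod card V}"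

definition arc_avoiding :: "'a set \<Rightarrow> (nat \<Rightarrow> 'a) \<Rightarrow> 'a \<Rightarrow> 'a \<Rightarrow> 'a \<Rightarrow> 'a set" where
  "arc_avoiding V f a b c = (if c \<notin> fwd_arc V f a b then fwd_arc V f a b else fwd_arc V f b a)"

definition induced_edges :: "'a set set \<Rightarrow> 'a set \<Rightarrow> 'a set set" where
  "induced_edges E S = {e \<in> E. e \<subseteq> S}"

text \<open>The uv-segment G_u(uv): vertex set and edge set (induced subgraph on u, w = Delta(uv)
  and the vertices on the side of uw not containing v).\<close>
definition seg_V :: "'a set \<Rightarrow> 'a set set \<Rightarrow> (nat \<Rightarrow> 'a) \<Rightarrow> 'a \<Rightarrow> 'a \<Rightarrow> 'a set" where
  "seg_V V E f u v = arc_avoiding V f u (Delta E u v) v"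

definition seg_E :: "'a set \<Rightarrow> 'a set set \<Rightarrow> (nat \<Rightarrow> 'a) \<Rightarrow> 'a \<Rightarrow> 'a \<Rightarrow> 'a set set" where
  "seg_E V E f u v = induced_edges E (seg_V V E f u v)"

definition vertex_cover :: "'a set \<Rightarrow> 'a set set \<Rightarrow> 'a set \<Rightarrow> bool" where
  "vertex_cover V E C \<longleftrightarrow> C \<subseteq> V \<and> (\<forall>e\<in>E. e \<inter> C \<noteq> {})"

definition mvc :: "'a set \<Rightarrow> 'a set set \<Rightarrow> 'a set \<Rightarrow> nat" where
  "mvc V E S = Min {card C | C. vertex_cover V E C \<and> S \<subseteq> C}"

end

theory Submission
  imports Defs
begin


lemma graph_edge: "graph V E \<Longrightarrow> e \<in> E \<Longrightarrow> \<exists>x y. x \<noteq> y \<and> e = {x,y} \<and> x \<in> V \<and> y \<in> V"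
  by (auto simp: graph_def)

lemma graph_sub: "graph V E \<Longrightarrow> e \<in> E \<Longrightarrow> e \<subseteq> V"
  by (auto simp: graph_def)

lemma graph_nloop: "graph V E \<Longrightarrow> {a,a} \<notin> E"
  unfolding graph_def by (metis doubleton_eq_iff insert_absorb2)

lemma graph_mem: "graph V E \<Longrightarrow> {a,b} \<in> E \<Longrightarrow> a \<in> V \<and> b \<in> V"
  using graph_sub by blast

lemma mvc_le: assumes "finite V" "vertex_cover V E C" "S \<subseteq> C"
  shows "mvc V E S \<le> card C"
proof -
  have "{card C |C. vertex_cover V E C \<and> S \<subseteq> C} \<subseteq> {..card V}"
    using assms(1) by (auto simp: vertex_cover_def intro: card_mono)
  hence "finite {card C |C. vertex_cover V E C \<and> S \<subseteq> C}" using finite_subset by blast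
  thus ?thesis unfolding mvc_def using assms by (intro Min_le) auto
qed

lemma mvc_ex: assumes "graph V E" "S \<subseteq> V"
  shows "\<exists>C. vertex_cover V E C \<and> S \<subseteq> C \<and> mvc V E S = card C"
proof -
  have fin: "finite V" using assms by (simp add: graph_def)
  have "{card C |C. vertex_cover V E C \<and> S \<subseteq> C} \<subseteq> {..card V}"
    using fin by (auto simp: vertex_cover_def intro: card_mono)
  hence f: "finite {card C |C. vertex_cover V E C \<and> S \<subseteq> C}" using finite_subset by blast
  have "vertex_cover V E V" using assms(1) unfolding vertex_cover_def graph_def by blast
  hence ne: "{card C |C. vertex_cover V E C \<and> S \<subseteq> C} \<noteq> {}" using assms(2) by blast
  have "mvc V E S \<in> {card C |C. vertex_cover V E C \<and> S \<subseteq> C}"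
    unfolding mvc_def using Min_in[OF f ne] .
  thus ?thesis by auto
qed

lemma mvc_mono: assumes "graph V E" "S \<subseteq> T" "T \<subseteq> V"
  shows "mvc V E S \<le> mvc V E T"
proof -
  obtain C where "vertex_cover V E C" "T \<subseteq> C" "mvc V E T = card C" using mvc_ex assms by blast
  thus ?thesis using mvc_le[of V E C S] assms by (auto simp: graph_def)
qed

lemma graph_induced: "graph V E \<Longrightarrow> W \<subseteq> V \<Longrightarrow> graph W (induced_edges E W)"
  unfolding graph_def induced_edges_def
  by (metis (no_types, lifting) finite_subset insert_subset mem_Collect_eq)

lemma vc_edge: assumes "vertex_cover V E C" "{x,y} \<in> E" shows "x \<in> C \<or> y \<in> C"
proof -
  have "{x,y} \<inter> C \<noteq> {}" using assms unfolding vertex_cover_def by blast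
  thus ?thesis by blast
qed

lemma core:
  assumes gr: "graph V E"
  and sub: "Vu \<subseteq> V" "Vv \<subseteq> V"
  and iuv: "Vu \<inter> Vv = {w}"
  and uin: "u \<in> Vu" and vin: "v \<in> Vv" and unv: "u \<notin> Vv" and vnu: "v \<notin> Vu"
  and euw: "{u,w} \<in> E" and evw: "{v,w} \<in> E" and euv: "{u,v} \<in> E"
  and dec: "\<forall>e\<in>E. e \<subseteq> Vu \<or> e \<subseteq> Vv \<or> e = {u,v}"
  and hyp: "mvc V E {} + 1 = mvc Vu (induced_edges E Vu) {} + mvc Vv (induced_edges E Vv) {}"
  shows "mvc V E {u} + 1 = mvc Vu (induced_edges E Vu) {u,w} + mvc Vv (induced_edges E Vv) {} \<and>
         mvc V E {v} + 1 = mvc Vu (induced_edges E Vu) {} + mvc Vv (induced_edges E Vv) {v,w} \<and>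
         mvc V E {u,v} + 1 = mvc Vu (induced_edges E Vu) {u,w} + mvc Vv (induced_edges E Vv) {v,w}"
proof -
  define Eu where "Eu = induced_edges E Vu"
  define Ev where "Ev = induced_edges E Vv"
  have fin: "finite V" using gr by (simp add: graph_def)
  have finu: "finite Vu" "finite Vv" using fin sub finite_subset by auto
  have gu: "graph Vu Eu" unfolding Eu_def using graph_induced[OF gr sub(1)] .
  have gv: "graph Vv Ev" unfolding Ev_def using graph_induced[OF gr sub(2)] .
  have win: "w \<in> Vu" "w \<in> Vv" using iuv by auto
  have uV: "u \<in> V" and vV: "v \<in> V" using sub uin vin by auto
  have euwu: "{u,w} \<in> Eu" using euw uin win unfolding Eu_def induced_edges_def by auto
  have evwv: "{v,w} \<in> Ev" using evw vin win unfolding Ev_def induced_edges_def by auto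
  have resu: "vertex_cover Vu Eu (C \<inter> Vu)" if "vertex_cover V E C" for C
    using that unfolding vertex_cover_def Eu_def induced_edges_def by blast
  have resv: "vertex_cover Vv Ev (C \<inter> Vv)" if "vertex_cover V E C" for C
    using that unfolding vertex_cover_def Ev_def induced_edges_def by blast
  have cardsplit: "card (C \<inter> Vu) + card (C \<inter> Vv) \<le> card C + (if w \<in> C then 1 else 0)"
    if "vertex_cover V E C" for C
  proof -
    have fC: "finite C" using that fin finite_subset unfolding vertex_cover_def by blast
    have "card ((C \<inter> Vu) \<union> (C \<inter> Vv)) + card ((C \<inter> Vu) \<inter> (C \<inter> Vv)) = card (C \<inter> Vu) + card (C \<inter> Vv)"
      using card_Un_Int[of "C \<inter> Vu" "C \<inter> Vv"] fC by simp
    moreover have "card ((C \<inter> Vu) \<union> (C \<inter> Vv)) \<le> card C" using fC by (intro card_mono) auto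
    moreover have "(C \<inter> Vu) \<inter> (C \<inter> Vv) = C \<inter> {w}" using iuv by auto
    moreover have "card (C \<inter> {w}) = (if w \<in> C then 1 else 0)" by auto
    ultimately have "card (C \<inter> Vu) + card (C \<inter> Vv) = card ((C \<inter> Vu) \<union> (C \<inter> Vv)) + (if w \<in> C then 1 else 0)"
      by simp
    thus ?thesis using \<open>card ((C \<inter> Vu) \<union> (C \<inter> Vv)) \<le> card C\<close> by linarith
  qed
  have merge: "vertex_cover V E (Cu \<union> Cv) \<and> card (Cu \<union> Cv) + (if w \<in> Cu \<and> w \<in> Cv then 1 else 0) \<le> card Cu + card Cv"
    if cu: "vertex_cover Vu Eu Cu" and cv: "vertex_cover Vv Ev Cv" and uv: "u \<in> Cu \<or> v \<in> Cv" for Cu Cv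
  proof
    show "vertex_cover V E (Cu \<union> Cv)"
      unfolding vertex_cover_def
    proof
      show "Cu \<union> Cv \<subseteq> V" using cu cv sub unfolding vertex_cover_def by blast
      show "\<forall>e\<in>E. e \<inter> (Cu \<union> Cv) \<noteq> {}"
      proof
        fix e assume e: "e \<in> E"
        from dec e consider "e \<subseteq> Vu" | "e \<subseteq> Vv" | "e = {u,v}" by blast
        thus "e \<inter> (Cu \<union> Cv) \<noteq> {}"
        proof cases
          case 1 hence "e \<in> Eu" using e unfolding Eu_def induced_edges_def by auto
          thus ?thesis using cu unfolding vertex_cover_def by blast
        next
          case 2 hence "e \<in> Ev" using e unfolding Ev_def induced_edges_def by auto
          thus ?thesis using cv unfolding vertex_cover_def by blast
        next
          case 3 thus ?thesis using uv by auto
        qed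
      qed
    qed
    have fCu: "finite Cu" using cu finu finite_subset unfolding vertex_cover_def by blast
    have fCv: "finite Cv" using cv finu finite_subset unfolding vertex_cover_def by blast
    have "card (Cu \<union> Cv) + card (Cu \<inter> Cv) = card Cu + card Cv" using card_Un_Int[OF fCu fCv] by simp
    moreover have "w \<in> Cu \<and> w \<in> Cv \<Longrightarrow> card (Cu \<inter> Cv) \<ge> 1"
      using fCu by (metis IntI card_0_eq finite_Int empty_iff less_one not_le)
    ultimately show "card (Cu \<union> Cv) + (if w \<in> Cu \<and> w \<in> Cv then 1 else 0) \<le> card Cu + card Cv"
      by auto
  qed
  define a0 where "a0 = mvc Vu Eu {}"
  define aw where "aw = mvc Vu Eu {w}"
  define auw where "auw = mvc Vu Eu {u,w}"
  define b0 where "b0 = mvc Vv Ev {}"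
  define bw where "bw = mvc Vv Ev {w}"
  define bvw where "bvw = mvc Vv Ev {v,w}"
  have m1: "a0 \<le> aw" "aw \<le> auw" unfolding a0_def aw_def auw_def
    using mvc_mono[OF gu] uin win by auto
  have m2: "b0 \<le> bw" "bw \<le> bvw" unfolding b0_def bw_def bvw_def
    using mvc_mono[OF gv] vin win by auto
  have f2u: "auw \<le> a0 + 1"
  proof -
    obtain C where C0: "vertex_cover Vu Eu C" "mvc Vu Eu {} = card C" using mvc_ex[OF gu, of "{}"] by blast
    hence C: "vertex_cover Vu Eu C" "a0 = card C" by (simp_all add: a0_def)
    have "{u,w} \<inter> C \<noteq> {}" using C(1) euwu unfolding vertex_cover_def by blast
    hence "u \<in> C \<or> w \<in> C" by blast
    have c2: "vertex_cover Vu Eu (C \<union> {u,w})" using C uin win unfolding vertex_cover_def by blast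
    have fC: "finite C" using C finu finite_subset unfolding vertex_cover_def by blast
    have "card (C \<union> {u,w}) \<le> card C + 1"
    proof (cases "u \<in> C")
      case True hence "C \<union> {u,w} = insert w C" by auto
      thus ?thesis using card_insert_le_m1 fC by (simp add: card_insert_if)
    next
      case False hence "C \<union> {u,w} = insert u C" using \<open>u \<in> C \<or> w \<in> C\<close> by auto
      thus ?thesis using fC by (simp add: card_insert_if)
    qed
    thus ?thesis using mvc_le[OF finu(1) c2, of "{u,w}"] C unfolding auw_def by auto
  qed
  have f2v: "bvw \<le> b0 + 1"
  proof -
    obtain C where C0: "vertex_cover Vv Ev C" "mvc Vv Ev {} = card C" using mvc_ex[OF gv, of "{}"] by blast
    hence C: "vertex_cover Vv Ev C" "b0 = card C" by (simp_all add: b0_def)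
    have "{v,w} \<inter> C \<noteq> {}" using C(1) evwv unfolding vertex_cover_def by blast
    hence "v \<in> C \<or> w \<in> C" by blast
    have c2: "vertex_cover Vv Ev (C \<union> {v,w})" using C vin win unfolding vertex_cover_def by blast
    have fC: "finite C" using C finu finite_subset unfolding vertex_cover_def by blast
    have "card (C \<union> {v,w}) \<le> card C + 1"
    proof (cases "v \<in> C")
      case True hence "C \<union> {v,w} = insert w C" by auto
      thus ?thesis using card_insert_le_m1 fC by (simp add: card_insert_if)
    next
      case False hence "C \<union> {v,w} = insert v C" using \<open>v \<in> C \<or> w \<in> C\<close> by auto
      thus ?thesis using fC by (simp add: card_insert_if)
    qed
    thus ?thesis using mvc_le[OF finu(2) c2, of "{v,w}"] C unfolding bvw_def by auto
  qed
  have lb: "(w \<in> C \<and> u \<in> C \<longrightarrow> auw + bw \<le> card C + 1) \<and>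
            (w \<in> C \<and> v \<in> C \<longrightarrow> aw + bvw \<le> card C + 1) \<and>
            (w \<in> C \<and> u \<in> C \<and> v \<in> C \<longrightarrow> auw + bvw \<le> card C + 1) \<and>
            (w \<notin> C \<longrightarrow> a0 + b0 \<le> card C)"
    if C: "vertex_cover V E C" for C
  proof -
    have cs: "card (C \<inter> Vu) + card (C \<inter> Vv) \<le> card C + (if w \<in> C then 1 else 0)"
      using cardsplit[OF C] .
    have ru: "mvc Vu Eu S \<le> card (C \<inter> Vu)" if "S \<subseteq> C \<inter> Vu" for S
      using mvc_le[OF finu(1) resu[OF C] that] .
    have rv: "mvc Vv Ev S \<le> card (C \<inter> Vv)" if "S \<subseteq> C \<inter> Vv" for S
      using mvc_le[OF finu(2) resv[OF C] that] .
    show ?thesis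
    proof (intro conjI impI)
      assume "w \<in> C \<and> u \<in> C" thus "auw + bw \<le> card C + 1"
        using cs ru[of "{u,w}"] rv[of "{w}"] uin win unfolding auw_def bw_def by auto
    next
      assume "w \<in> C \<and> v \<in> C" thus "aw + bvw \<le> card C + 1"
        using cs ru[of "{w}"] rv[of "{v,w}"] vin win unfolding aw_def bvw_def by auto
    next
      assume "w \<in> C \<and> u \<in> C \<and> v \<in> C" thus "auw + bvw \<le> card C + 1"
        using cs ru[of "{u,w}"] rv[of "{v,w}"] uin vin win unfolding auw_def bvw_def by auto
    next
      assume "w \<notin> C" thus "a0 + b0 \<le> card C"
        using cs ru[of "{}"] rv[of "{}"] unfolding a0_def b0_def by auto
    qed
  qed
  have covuv: "u \<in> C \<or> v \<in> C" "u \<in> C \<or> w \<in> C" "v \<in> C \<or> w \<in> C" if "vertex_cover V E C" for C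
    using vc_edge[OF that euv] vc_edge[OF that euw] vc_edge[OF that evw] by auto
  have H: "(auw = a0 \<and> bw = b0) \<or> (aw = a0 \<and> bvw = b0)"
  proof -
    obtain C where C: "vertex_cover V E C" "mvc V E {} = card C" using mvc_ex[OF gr, of "{}"] by auto
    have hc: "card C + 1 = a0 + b0" using hyp C unfolding a0_def b0_def Eu_def Ev_def by simp
    show ?thesis
    proof (cases "w \<in> C")
      case False thus ?thesis using lb[OF C(1)] hc by auto
    next
      case True
      then consider "u \<in> C" | "v \<in> C" using covuv[OF C(1)] by blast
      thus ?thesis
      proof cases
        case 1 thus ?thesis using lb[OF C(1)] True hc m1 m2 by auto
      next
        case 2 thus ?thesis using lb[OF C(1)] True hc m1 m2 by auto
      qed
    qed
  qed
  have awe: "aw = a0" and bwe: "bw = b0" using H m1 m2 by auto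
  obtain Cuw where Cuw: "vertex_cover Vu Eu Cuw" "{u,w} \<subseteq> Cuw" "auw = card Cuw"
    using mvc_ex[OF gu, of "{u,w}"] uin win auw_def by auto
  obtain Cw where Cw: "vertex_cover Vu Eu Cw" "{w} \<subseteq> Cw" "aw = card Cw"
    using mvc_ex[OF gu, of "{w}"] win aw_def by auto
  obtain Dvw where Dvw: "vertex_cover Vv Ev Dvw" "{v,w} \<subseteq> Dvw" "bvw = card Dvw"
    using mvc_ex[OF gv, of "{v,w}"] vin win bvw_def by auto
  obtain Dw where Dw: "vertex_cover Vv Ev Dw" "{w} \<subseteq> Dw" "bw = card Dw"
    using mvc_ex[OF gv, of "{w}"] win bw_def by auto
  have U1: "mvc V E {u} + 1 \<le> auw + bw"
  proof -
    have "vertex_cover V E (Cuw \<union> Dw) \<and> card (Cuw \<union> Dw) + (if w \<in> Cuw \<and> w \<in> Dw then 1 else 0) \<le> card Cuw + card Dw"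
      using merge[OF Cuw(1) Dw(1)] Cuw by auto
    thus ?thesis using mvc_le[OF fin, of E "Cuw \<union> Dw" "{u}"] Cuw Dw by auto
  qed
  have U2: "mvc V E {v} + 1 \<le> aw + bvw"
  proof -
    have "vertex_cover V E (Cw \<union> Dvw) \<and> card (Cw \<union> Dvw) + (if w \<in> Cw \<and> w \<in> Dvw then 1 else 0) \<le> card Cw + card Dvw"
      using merge[OF Cw(1) Dvw(1)] Dvw by auto
    thus ?thesis using mvc_le[OF fin, of E "Cw \<union> Dvw" "{v}"] Cw Dvw by auto
  qed
  have U3: "mvc V E {u,v} + 1 \<le> auw + bvw"
  proof -
    have "vertex_cover V E (Cuw \<union> Dvw) \<and> card (Cuw \<union> Dvw) + (if w \<in> Cuw \<and> w \<in> Dvw then 1 else 0) \<le> card Cuw + card Dvw"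
      using merge[OF Cuw(1) Dvw(1)] Dvw by auto
    thus ?thesis using mvc_le[OF fin, of E "Cuw \<union> Dvw" "{u,v}"] Cuw Dvw by auto
  qed
  have L1: "auw + b0 \<le> mvc V E {u} + 1"
  proof -
    obtain C where C: "vertex_cover V E C" "{u} \<subseteq> C" "mvc V E {u} = card C" using mvc_ex[OF gr, of "{u}"] uV by auto
    show ?thesis using lb[OF C(1)] C f2u bwe by (cases "w \<in> C") auto
  qed
  have L2: "a0 + bvw \<le> mvc V E {v} + 1"
  proof -
    obtain C where C: "vertex_cover V E C" "{v} \<subseteq> C" "mvc V E {v} = card C" using mvc_ex[OF gr, of "{v}"] vV by auto
    show ?thesis using lb[OF C(1)] C f2v awe by (cases "w \<in> C") auto
  qed
  have L3: "auw + bvw \<le> mvc V E {u,v} + 1"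
  proof -
    obtain C where C: "vertex_cover V E C" "{u,v} \<subseteq> C" "mvc V E {u,v} = card C" using mvc_ex[OF gr, of "{u,v}"] uV vV by auto
    show ?thesis using lb[OF C(1)] C f2v f2u H by (cases "w \<in> C") auto
  qed
  show ?thesis using U1 U2 U3 L1 L2 L3 awe bwe
    unfolding a0_def b0_def auw_def bvw_def Eu_def Ev_def by linarith
qed


lemma modsmall: "(x::nat) < 2*n \<Longrightarrow> x mod n = (if x < n then x else x - n)"
proof (cases "x < n")
  case False
  assume "x < 2*n"
  hence "x - n < n" by simp
  moreover have "x mod n = (x - n) mod n" using False by (simp add: le_mod_geq)
  ultimately show ?thesis using False by simp
qed simp

lemma A1: "i < n \<Longrightarrow> Suc m < n \<Longrightarrow> ((m + Suc i) mod n + n - i) mod n = Suc m"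
  by (cases "m + Suc i < n") (auto simp: modsmall)
lemma A2: "i < n \<Longrightarrow> Suc m < n \<Longrightarrow> (i + n - (m + Suc i) mod n) mod n = n - 1 - m"
  by (cases "m + Suc i < n") (auto simp: modsmall)
lemma A3: "i < n \<Longrightarrow> Suc m < n \<Longrightarrow> ((m + Suc i) mod n + n - Suc i mod n) mod n = m"
proof -
  assume a: "i < n" "Suc m < n"
  show ?thesis
  proof (cases "Suc i = n")
    case True thus ?thesis using a by simp
  next
    case False
    hence s: "Suc i mod n = Suc i" using a by simp
    show ?thesis unfolding s using a by (cases "m + Suc i < n") (auto simp: modsmall)
  qed
qed
lemma A4: "((m + Suc i) mod n + k) mod n = (m + k + Suc i) mod n"
proof -
  have "((m + Suc i) mod n + k) mod n = (m + Suc i + k) mod n" by (rule mod_add_left_eq)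
  thus ?thesis by (simp add: ac_simps)
qed
lemma A5: "(Suc i mod n + k) mod n = (k + Suc i) mod n"
proof -
  have "(Suc i mod n + k) mod n = (Suc i + k) mod n" by (rule mod_add_left_eq)
  thus ?thesis by (simp add: ac_simps)
qed
lemma A7: "i < n \<Longrightarrow> ((n - 1) + Suc i) mod n = i"
  by (simp add: modsmall)
lemma A8: "i < n \<Longrightarrow> k < n \<Longrightarrow> ((k + (n-1-i)) mod n + Suc i) mod n = k"
proof -
  assume a: "i < n" "k < n"
  have "((k + (n-1-i)) mod n + Suc i) mod n = (k + (n-1-i) + Suc i) mod n" by (rule mod_add_left_eq)
  also have "k + (n-1-i) + Suc i = k + n" using a by simp
  finally show ?thesis using a by simp
qed
lemma A9: "(a::nat) < n \<Longrightarrow> b < n \<Longrightarrow> (a + c) mod n = (b + c) mod n \<Longrightarrow> a = b"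
proof -
  assume a: "a < n" "b < n" "(a + c) mod n = (b + c) mod n"
  have n: "n > 0" using a by simp
  have "(a + c) mod n = (a + c mod n) mod n" "(b + c) mod n = (b + c mod n) mod n"
    by (simp_all add: mod_add_right_eq)
  moreover have "c mod n < n" using n by simp
  ultimately show "a = b" using a by (auto simp: modsmall split: if_splits)
qed


definition nc :: "nat \<Rightarrow> (nat \<Rightarrow> 'a) \<Rightarrow> 'a set set \<Rightarrow> bool" where
  "nc n h E \<longleftrightarrow> (\<forall>a b c d. a < c \<and> c < b \<and> b < d \<and> d < n \<and> {h a, h b} \<in> E \<longrightarrow> {h c, h d} \<notin> E)"

lemma oe_nc: "outer_embedding V E f \<longleftrightarrow> bij_betw f {..<card V} V \<and> nc (card V) f E"
  by (simp add: outer_embedding_def nc_def)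

lemma ncD: "nc n h E \<Longrightarrow> a < c \<Longrightarrow> c < b \<Longrightarrow> b < d \<Longrightarrow> d < n \<Longrightarrow> {h a, h b} \<in> E \<Longrightarrow> {h c, h d} \<notin> E"
  unfolding nc_def by blast

lemma nc_cong: assumes "\<And>k. k < n \<Longrightarrow> h k = h' k" "nc n h E" shows "nc n h' E"
  unfolding nc_def
proof (intro allI impI)
  fix a b c d assume H: "a < c \<and> c < b \<and> b < d \<and> d < n \<and> {h' a, h' b} \<in> E"
  hence "a < n" "b < n" "c < n" "d < n" by auto
  hence "h a = h' a" "h b = h' b" "h c = h' c" "h d = h' d" using assms(1) by auto
  thus "{h' c, h' d} \<notin> E" using ncD[OF assms(2), of a c b d] H by auto
qed

lemma nc_rot1: assumes "nc n h E" shows "nc n (\<lambda>k. h (Suc k mod n)) E"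
  unfolding nc_def
proof (intro allI impI notI)
  fix a b c d assume H: "a < c \<and> c < b \<and> b < d \<and> d < n \<and> {h (Suc a mod n), h (Suc b mod n)} \<in> E"
    and H2: "{h (Suc c mod n), h (Suc d mod n)} \<in> E"
  have s: "Suc a mod n = Suc a" "Suc b mod n = Suc b" "Suc c mod n = Suc c" using H by auto
  show False
  proof (cases "Suc d < n")
    case True
    thus False using ncD[OF assms, of "Suc a" "Suc c" "Suc b" "Suc d"] H H2 s by auto
  next
    case False
    hence "Suc d = n" using H by auto
    hence "Suc d mod n = 0" by simp
    hence "{h 0, h (Suc c)} \<in> E" using H2 s by (simp add: insert_commute)
    thus False using ncD[OF assms, of 0 "Suc a" "Suc c" "Suc b"] H s by auto
  qed
qed

lemma nc_rot: assumes "nc n h E" shows "nc n (\<lambda>k. h ((k + s) mod n)) E"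
proof (induction s)
  case 0 show ?case by (rule nc_cong[OF _ assms]) simp
next
  case (Suc s)
  have N1: "nc n (\<lambda>k. (\<lambda>k. h ((k + s) mod n)) (Suc k mod n)) E" using nc_rot1[OF Suc] .
  have eq: "(Suc k mod n + s) mod n = (k + Suc s) mod n" for k
  proof -
    have "(Suc k mod n + s) mod n = (Suc k + s) mod n" by (rule mod_add_left_eq)
    thus ?thesis by simp
  qed
  show ?case by (rule nc_cong[OF _ N1]) (simp only: eq)
qed

lemma maxcross:
  assumes mo: "maximal_outerplanar V E" and bij: "bij_betw f {..<card V} V"
    and x: "x \<in> V" "y \<in> V" "x \<noteq> y" "{x,y} \<notin> E"
  shows "\<not> nc (card V) f (insert {x,y} E)"
proof
  assume N: "nc (card V) f (insert {x,y} E)"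
  have gr: "graph V E" using mo by (simp add: maximal_outerplanar_def outerplanar_def)
  have "graph V (insert {x,y} E)" using gr x unfolding graph_def by blast
  hence "outerplanar V (insert {x,y} E)" using N bij unfolding outerplanar_def oe_nc by blast
  moreover have "\<not> outerplanar V (insert {x,y} E)" using mo x unfolding maximal_outerplanar_def by simp
  ultimately show False by simp
qed

lemma nc_extract:
  assumes inj: "inj_on g {..<n}" and nc: "nc n g E" and nn: "\<not> nc n g (insert {g p, g q} E)"
    and pq: "p < q" "q < n"
  shows "\<exists>a b c d. a < c \<and> c < b \<and> b < d \<and> d < n \<and>
     ((a = p \<and> b = q \<and> {g c, g d} \<in> E) \<or> ({g a, g b} \<in> E \<and> c = p \<and> d = q))"
proof -
  obtain a b c d where H: "a < c" "c < b" "b < d" "d < n"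
    and e1: "{g a, g b} \<in> insert {g p, g q} E" and e2: "{g c, g d} \<in> insert {g p, g q} E"
    using nn unfolding nc_def by blast
  have lt: "a < n" "b < n" "c < n" "d < n" "p < n" using H pq by auto
  have eqv: "{g x, g y} = {g p, g q} \<Longrightarrow> x < y \<Longrightarrow> y < n \<Longrightarrow> x = p \<and> y = q" for x y
  proof -
    assume e: "{g x, g y} = {g p, g q}" and xy: "x < y" "y < n"
    have "(g x = g p \<and> g y = g q) \<or> (g x = g q \<and> g y = g p)" using e by (auto simp: doubleton_eq_iff)
    moreover have "x < n" "p < n" using xy pq by auto
    ultimately have "(x = p \<and> y = q) \<or> (x = q \<and> y = p)" using inj xy pq unfolding inj_on_def by auto
    thus ?thesis using xy pq by auto
  qed
  show ?thesis
  proof (cases "{g a, g b} \<in> E")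
    case True
    hence "{g c, g d} \<notin> E" using ncD[OF nc H] by blast
    hence "{g c, g d} = {g p, g q}" using e2 by blast
    hence "c = p \<and> d = q" using eqv H by auto
    thus ?thesis using H True by (intro exI[of _ a] exI[of _ b] exI[of _ c] exI[of _ d]) simp
  next
    case False
    hence "{g a, g b} = {g p, g q}" using e1 by blast
    hence ab: "a = p \<and> b = q" using eqv H by auto
    have "{g c, g d} \<in> E"
    proof (rule ccontr)
      assume "{g c, g d} \<notin> E"
      hence "{g c, g d} = {g p, g q}" using e2 by blast
      hence "c = p" using eqv H by auto
      thus False using ab H by simp
    qed
    thus ?thesis using H ab by (intro exI[of _ a] exI[of _ b] exI[of _ c] exI[of _ d]) simp
  qed
qed



lemma geo:
  assumes gr: "graph V E" and inj: "inj_on g {..<n}" and img: "g ` {..<n} = V"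
    and nc: "nc n g E"
    and mx: "\<And>p q. p < q \<Longrightarrow> q < n \<Longrightarrow> {g p, g q} \<notin> E \<Longrightarrow> \<not> nc n g (insert {g p, g q} E)"
    and n3: "n \<ge> 3"
    and deg: "\<exists>y\<in>V. {g 0, y} \<in> E \<and> y \<noteq> g (n-1)"
  shows "\<exists>m. 0 < m \<and> m < n-1 \<and> Delta E (g (n-1)) (g 0) = g m \<and> {g (n-1), g m} \<in> E \<and> {g 0, g m} \<in> E \<and>
     (\<forall>e\<in>E. e \<subseteq> g ` {m..n-1} \<or> e \<subseteq> g ` {0..m} \<or> e = {g (n-1), g 0})"
proof -
  have loop: "{x,x} \<notin> E" for x using graph_nloop[OF gr] .
  have n1: "n - 1 < n" using n3 by simp
  define N where "N = {j. 0 < j \<and> j < n-1 \<and> {g 0, g j} \<in> E}"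
  have finN: "finite N" unfolding N_def by (rule finite_subset[of _ "{..<n}"]) auto
  obtain y where y: "y \<in> V" "{g 0, y} \<in> E" "y \<noteq> g (n-1)" using deg by blast
  obtain j where j: "j < n" "g j = y" using y(1) img by auto
  have "j \<noteq> 0" proof assume "j = 0" thus False using y(2) j loop[of "g 0"] by simp qed
  moreover have "j \<noteq> n-1" using y(3) j by auto
  ultimately have "j \<in> N" using j y unfolding N_def by auto
  hence neN: "N \<noteq> {}" by auto
  define m where "m = Max N"
  have mN: "m \<in> N" unfolding m_def using finN neN by (rule Max_in)
  have mmax: "k \<in> N \<Longrightarrow> k \<le> m" for k unfolding m_def using finN by (rule Max_ge)
  have m: "0 < m" "m < n-1" "{g 0, g m} \<in> E" using mN N_def by auto
  have um: "{g (n-1), g m} \<in> E"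
  proof (rule ccontr)
    assume A: "{g (n-1), g m} \<notin> E"
    hence "{g m, g (n-1)} \<notin> E" by (simp add: insert_commute)
    hence nn: "\<not> nc n g (insert {g m, g (n-1)} E)" using mx m n1 by blast
    obtain a b c d where H: "a < c" "c < b" "b < d" "d < n"
      and C: "(a = m \<and> b = n-1 \<and> {g c, g d} \<in> E) \<or> ({g a, g b} \<in> E \<and> c = m \<and> d = n-1)"
      using nc_extract[OF inj nc nn m(2) n1] by blast
    show False
    proof (cases "a = m \<and> b = n-1")
      case True thus False using H by auto
    next
      case False
      hence ab: "{g a, g b} \<in> E" "c = m" "d = n-1" using C by auto
      show False
      proof (cases "a = 0")
        case True
        hence "b \<in> N" using ab H unfolding N_def by auto
        thus False using mmax H ab by fastforce
      next
        case False
        thus False using ncD[OF nc, of 0 a m b] ab H m by auto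
      qed
    qed
  qed
  have uniq: "x = g m" if "{g (n-1), x} \<in> E" "{g 0, x} \<in> E" for x
  proof -
    have "x \<in> V" using graph_mem[OF gr that(2)] by auto
    then obtain k where k: "k < n" "g k = x" using img by auto
    have "k \<noteq> 0" proof assume "k = 0" thus False using that k loop[of "g 0"] by simp qed
    moreover have "k \<noteq> n-1" proof assume "k = n-1" thus False using that k loop[of "g (n-1)"] by simp qed
    moreover have "\<not> k < m"
    proof
      assume "k < m"
      hence "{g k, g (n-1)} \<notin> E" using ncD[OF nc, of 0 k m "n-1"] m \<open>k\<noteq>0\<close> by auto
      thus False using that k by (simp add: insert_commute)
    qed
    moreover have "\<not> m < k"
    proof
      assume "m < k"
      hence "{g m, g (n-1)} \<notin> E" using ncD[OF nc, of 0 m k "n-1"] m \<open>k\<noteq>n-1\<close> k that by auto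
      thus False using um by (simp add: insert_commute)
    qed
    ultimately show ?thesis using k by auto
  qed
  have delta: "Delta E (g (n-1)) (g 0) = g m"
    unfolding Delta_def
  proof (rule the_equality)
    show "{g (n - 1), g m} \<in> E \<and> {g 0, g m} \<in> E" using um m(3) by simp
  next
    fix x assume "{g (n - 1), x} \<in> E \<and> {g 0, x} \<in> E"
    thus "x = g m" using uniq by blast
  qed
  have dec2: "{g i, g j} \<subseteq> g ` {m..n-1} \<or> {g i, g j} \<subseteq> g ` {0..m} \<or> {g i, g j} = {g (n-1), g 0}"
    if ij: "i < j" "j < n" "{g i, g j} \<in> E" for i j
  proof (cases "m \<le> i")
    case True thus ?thesis using ij by auto
  next
    case False
    show ?thesis
    proof (cases "j \<le> m")
      case True thus ?thesis using ij by auto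
    next
      case False2: False
      show ?thesis
      proof (cases "i = 0")
        case True
        show ?thesis
        proof (cases "j = n-1")
          case True thus ?thesis using \<open>i=0\<close> by (simp add: insert_commute)
        next
          case False
          hence "j \<in> N" using ij \<open>i=0\<close> unfolding N_def by auto
          thus ?thesis using mmax False2 by fastforce
        qed
      next
        case False3: False
        thus ?thesis using ncD[OF nc, of 0 i m j] ij m False False2 by auto
      qed
    qed
  qed
  have dec: "\<forall>e\<in>E. e \<subseteq> g ` {m..n-1} \<or> e \<subseteq> g ` {0..m} \<or> e = {g (n-1), g 0}"
  proof
    fix e assume e: "e \<in> E"
    obtain x y where xy: "x \<noteq> y" "e = {x,y}" "x \<in> V" "y \<in> V" using graph_edge[OF gr e] by blast
    obtain i where i: "i < n" "g i = x" using xy img by auto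
    obtain j where j: "j < n" "g j = y" using xy img by auto
    have "i \<noteq> j" using i j xy by auto
    hence "i < j \<or> j < i" by auto
    thus "e \<subseteq> g ` {m..n-1} \<or> e \<subseteq> g ` {0..m} \<or> e = {g (n-1), g 0}"
    proof
      assume "i < j" thus ?thesis using dec2[of i j] e xy i j by auto
    next
      assume "j < i" thus ?thesis using dec2[of j i] e xy i j by (auto simp: insert_commute)
    qed
  qed
  show ?thesis using m um delta dec by (intro exI[of _ m]) simp
qed



lemma Delta_comm: "Delta E v u = Delta E u v"
proof -
  have "(\<lambda>w. {v,w} \<in> E \<and> {u,w} \<in> E) = (\<lambda>w. {u,w} \<in> E \<and> {v,w} \<in> E)" by auto
  thus ?thesis unfolding Delta_def by simp
qed

lemma wlog:
  assumes mo: "maximal_outerplanar V E" and oe: "outer_embedding V E f" and n4: "card V \<ge> 4"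
    and i: "i < card V" and u: "u = f i" and v: "v = f (Suc i mod card V)"
    and euv: "{u,v} \<in> E"
    and dv: "deg V E v > 2"
    and hyp: "mvc V E {} + 1 = mvc (seg_V V E f u v) (seg_E V E f u v) {} + mvc (seg_V V E f v u) (seg_E V E f v u) {}"
  shows "mvc V E {u} + 1 = mvc (seg_V V E f u v) (seg_E V E f u v) {u, Delta E u v} + mvc (seg_V V E f v u) (seg_E V E f v u) {} \<and>
         mvc V E {v} + 1 = mvc (seg_V V E f u v) (seg_E V E f u v) {} + mvc (seg_V V E f v u) (seg_E V E f v u) {v, Delta E u v} \<and>
         mvc V E {u,v} + 1 = mvc (seg_V V E f u v) (seg_E V E f u v) {u, Delta E u v} + mvc (seg_V V E f v u) (seg_E V E f v u) {v, Delta E u v}"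
proof -
  define n where "n = card V"
  have gr: "graph V E" using mo by (simp add: maximal_outerplanar_def outerplanar_def)
  have bij: "bij_betw f {..<n} V" and ncf: "nc n f E" using oe unfolding oe_nc n_def by auto
  have injf: "inj_on f {..<n}" and imgf: "f ` {..<n} = V" using bij by (auto simp: bij_betw_def)
  have n0: "n > 0" and n3: "n \<ge> 3" using n4 n_def by auto
  have i': "i < n" using i n_def by simp
  have v': "v = f (Suc i mod n)" using v n_def by simp
  define g where "g k = f ((k + Suc i) mod n)" for k
  have ginj: "inj_on g {..<n}"
  proof (rule inj_onI)
    fix a b assume ab: "a \<in> {..<n}" "b \<in> {..<n}" "g a = g b"
    hence "(a + Suc i) mod n = (b + Suc i) mod n"
      using injf n0 unfolding g_def inj_on_def by simp
    thus "a = b" using A9[of a n b "Suc i"] ab by simp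
  qed
  have gimg: "g ` {..<n} = V"
  proof
    show "g ` {..<n} \<subseteq> V" using imgf n0 unfolding g_def by auto
    show "V \<subseteq> g ` {..<n}"
    proof
      fix x assume "x \<in> V"
      then obtain k where k: "k < n" "f k = x" using imgf by auto
      have "g ((k + (n-1-i)) mod n) = x" unfolding g_def using A8[OF i' k(1)] k by simp
      moreover have "(k + (n-1-i)) mod n < n" using n0 by simp
      ultimately show "x \<in> g ` {..<n}" by blast
    qed
  qed
  have ncg: "nc n g E" unfolding g_def using nc_rot[OF ncf] .
  have bk: "nc n f E'" if "nc n g E'" for E'
  proof -
    have "nc n (\<lambda>k. g ((k + (n-1-i)) mod n)) E'" using nc_rot[OF that] .
    thus ?thesis by (rule nc_cong[rotated]) (simp only: g_def A8[OF i'])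
  qed
  have mxg: "\<not> nc n g (insert {g p, g q} E)" if pq: "p < q" "q < n" "{g p, g q} \<notin> E" for p q
  proof
    assume "nc n g (insert {g p, g q} E)"
    hence "nc n f (insert {g p, g q} E)" by (rule bk)
    moreover have "g p \<in> V" "g q \<in> V" using gimg pq by auto
    moreover have "g p \<noteq> g q"
    proof
      assume "g p = g q"
      hence "p = q" using inj_onD[OF ginj] pq by simp
      thus False using pq by simp
    qed
    ultimately show False using maxcross[OF mo bij[unfolded n_def]] pq n_def by blast
  qed
  have g0: "g 0 = v" unfolding g_def v' by simp
  have gl: "g (n-1) = u" unfolding g_def u using A7[OF i'] by simp
  have degf: "\<exists>y\<in>V. {g 0, y} \<in> E \<and> y \<noteq> g (n-1)"
  proof (rule ccontr)
    assume "\<not> ?thesis"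
    hence "{y \<in> V. {v, y} \<in> E} \<subseteq> {u}" using g0 gl by auto
    hence "card {y \<in> V. {v, y} \<in> E} \<le> card {u}" by (intro card_mono) auto
    thus False using dv unfolding deg_def by simp
  qed
  obtain m where m: "0 < m" "m < n-1" "Delta E (g (n-1)) (g 0) = g m" "{g (n-1), g m} \<in> E" "{g 0, g m} \<in> E"
    and dec: "\<forall>e\<in>E. e \<subseteq> g ` {m..n-1} \<or> e \<subseteq> g ` {0..m} \<or> e = {g (n-1), g 0}"
    using geo[OF gr ginj gimg ncg mxg n3 degf] by blast
  have w: "Delta E u v = g m" using m(3) g0 gl by simp
  have w': "Delta E v u = g m" using w Delta_comm by metis
  have posf: "pos V f (f k) = k" if "k < n" for k
    unfolding pos_def n_def[symmetric] by (rule inv_into_f_f[OF injf]) (use that in simp)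
  have gm: "g m = f ((m + Suc i) mod n)" by (simp add: g_def)
  have pu: "pos V f u = i" using posf[OF i'] u by simp
  have pv: "pos V f v = Suc i mod n" using posf[of "Suc i mod n"] v' n0 by simp
  have pw: "pos V f (g m) = (m + Suc i) mod n" using posf[of "(m + Suc i) mod n"] gm n0 by simp
  have Sm: "Suc m < n" using m by simp
  have arc1: "fwd_arc V f u (g m) = {f ((i + k) mod n) | k. k \<le> Suc m}"
    unfolding fwd_arc_def pu pw n_def[symmetric] A1[OF i' Sm] ..
  have vin1: "v \<in> fwd_arc V f u (g m)" unfolding arc1 v' 
    by (rule CollectI, rule exI[of _ 1]) simp
  have arc2: "fwd_arc V f (g m) u = g ` {m..n-1}"
  proof -
    have "fwd_arc V f (g m) u = {f (((m + Suc i) mod n + k) mod n) | k. k \<le> n - 1 - m}"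
      unfolding fwd_arc_def pu pw n_def[symmetric] A2[OF i' Sm] ..
    also have "\<dots> = {g (m + k) | k. k \<le> n - 1 - m}" unfolding g_def A4 ..
    also have "\<dots> = g ` {m..n-1}"
    proof
      show "{g (m + k) | k. k \<le> n - 1 - m} \<subseteq> g ` {m..n-1}"
      proof
        fix x assume "x \<in> {g (m + k) | k. k \<le> n - 1 - m}"
        then obtain k where "k \<le> n - 1 - m" "x = g (m + k)" by blast
        moreover hence "m + k \<in> {m..n-1}" using m by simp
        ultimately show "x \<in> g ` {m..n-1}" by blast
      qed
      show "g ` {m..n-1} \<subseteq> {g (m + k) | k. k \<le> n - 1 - m}"
      proof
        fix x assume "x \<in> g ` {m..n-1}"
        then obtain j where "j \<in> {m..n-1}" "x = g j" by auto
        hence "x = g (m + (j - m))" "j - m \<le> n - 1 - m" by auto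
        thus "x \<in> {g (m + k) | k. k \<le> n - 1 - m}" by blast
      qed
    qed
    finally show ?thesis .
  qed
  have arc3: "fwd_arc V f v (g m) = g ` {0..m}"
  proof -
    have "fwd_arc V f v (g m) = {f ((Suc i mod n + k) mod n) | k. k \<le> m}"
      unfolding fwd_arc_def pv pw n_def[symmetric] A3[OF i' Sm] ..
    also have "\<dots> = {g k | k. k \<le> m}" unfolding g_def A5 ..
    also have "\<dots> = g ` {0..m}" by auto
    finally show ?thesis .
  qed
  have unv: "u \<notin> g ` {0..m}"
  proof
    assume "u \<in> g ` {0..m}"
    then obtain j where j: "j \<le> m" "g j = g (n-1)" using gl by auto
    have "j < n" "n - 1 < n" using j m n0 by auto
    hence "j = n - 1" using inj_onD[OF ginj j(2)] by simp
    thus False using j m by simp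
  qed
  have vnu: "v \<notin> g ` {m..n-1}"
  proof
    assume "v \<in> g ` {m..n-1}"
    then obtain j where j: "m \<le> j" "j \<le> n-1" "g j = g 0" using g0 by auto
    have "j < n" "0 < n" using j m n0 by auto
    hence "j = 0" using inj_onD[OF ginj j(3)] by simp
    thus False using j m by simp
  qed
  have segu: "seg_V V E f u v = g ` {m..n-1}"
    unfolding seg_V_def arc_avoiding_def w using vin1 arc2 by simp
  have segv: "seg_V V E f v u = g ` {0..m}"
    unfolding seg_V_def arc_avoiding_def w' using unv arc3 by simp
  have iuv: "g ` {m..n-1} \<inter> g ` {0..m} = {g m}"
  proof -
    have "g ` {m..n-1} \<inter> g ` {0..m} = g ` ({m..n-1} \<inter> {0..m})"
      by (rule inj_on_image_Int[OF ginj, symmetric]) (use n0 m in auto)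
    also have "{m..n-1} \<inter> {0..m} = {m}" using m by auto
    finally show ?thesis by simp
  qed
  have C: "mvc V E {u} + 1 = mvc (g ` {m..n-1}) (induced_edges E (g ` {m..n-1})) {u, g m} + mvc (g ` {0..m}) (induced_edges E (g ` {0..m})) {} \<and>
         mvc V E {v} + 1 = mvc (g ` {m..n-1}) (induced_edges E (g ` {m..n-1})) {} + mvc (g ` {0..m}) (induced_edges E (g ` {0..m})) {v, g m} \<and>
         mvc V E {u,v} + 1 = mvc (g ` {m..n-1}) (induced_edges E (g ` {m..n-1})) {u, g m} + mvc (g ` {0..m}) (induced_edges E (g ` {0..m})) {v, g m}"
  proof (rule core[OF gr])
    show "g ` {m..n-1} \<subseteq> V" "g ` {0..m} \<subseteq> V" using gimg m by auto
    show "g ` {m..n-1} \<inter> g ` {0..m} = {g m}" by (rule iuv)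
    show "u \<in> g ` {m..n-1}" using gl m by auto
    show "v \<in> g ` {0..m}" using g0 by auto
    show "u \<notin> g ` {0..m}" by (rule unv)
    show "v \<notin> g ` {m..n-1}" by (rule vnu)
    show "{u, g m} \<in> E" using m gl by simp
    show "{v, g m} \<in> E" using m g0 by simp
    show "{u, v} \<in> E" by (rule euv)
    show "\<forall>e\<in>E. e \<subseteq> g ` {m..n-1} \<or> e \<subseteq> g ` {0..m} \<or> e = {u,v}" using dec g0 gl by simp
    show "mvc V E {} + 1 = mvc (g ` {m..n-1}) (induced_edges E (g ` {m..n-1})) {} + mvc (g ` {0..m}) (induced_edges E (g ` {0..m})) {}"
      using hyp unfolding seg_E_def segu segv .
  qed
  show ?thesis using C unfolding seg_E_def segu segv w .
qed


theorem lemma2: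
  fixes V :: "'a set" and E :: "'a set set" and f :: "nat \<Rightarrow> 'a" and u v :: 'a
  assumes "maximal_outerplanar V E"
    and "outer_embedding V E f"
    and "card V \<ge> 4"
    and "outer_edge V E f u v"
    and "deg V E u > 2" and "deg V E v > 2"
    and "int (mvc V E {}) =
           int (mvc (seg_V V E f u v) (seg_E V E f u v) {})
         + int (mvc (seg_V V E f v u) (seg_E V E f v u) {}) - 1"
  shows "int (mvc V E {u}) =
           int (mvc (seg_V V E f u v) (seg_E V E f u v) {u, Delta E u v})
         + int (mvc (seg_V V E f v u) (seg_E V E f v u) {}) - 1 \<and>
         int (mvc V E {v}) =
           int (mvc (seg_V V E f u v) (seg_E V E f u v) {})
         + int (mvc (seg_V V E f v u) (seg_E V E f v u) {v, Delta E u v}) - 1 \<and>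
         int (mvc V E {u, v}) =
           int (mvc (seg_V V E f u v) (seg_E V E f u v) {u, Delta E u v})
         + int (mvc (seg_V V E f v u) (seg_E V E f v u) {v, Delta E u v}) - 1"
proof -
  obtain i where i: "i < card V" "{u,v} = {f i, f (Suc i mod card V)}" and euv: "{u,v} \<in> E"
    using assms(4) unfolding outer_edge_def by blast
  have hypn: "mvc V E {} + 1 = mvc (seg_V V E f u v) (seg_E V E f u v) {} + mvc (seg_V V E f v u) (seg_E V E f v u) {}"
    using assms(7) by linarith
  have hypn': "mvc V E {} + 1 = mvc (seg_V V E f v u) (seg_E V E f v u) {} + mvc (seg_V V E f u v) (seg_E V E f u v) {}"
    using hypn by simp
  have euv': "{v,u} \<in> E" using euv by (simp add: insert_commute)
  have R: "mvc V E {u} + 1 = mvc (seg_V V E f u v) (seg_E V E f u v) {u, Delta E u v} + mvc (seg_V V E f v u) (seg_E V E f v u) {} \<and>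
         mvc V E {v} + 1 = mvc (seg_V V E f u v) (seg_E V E f u v) {} + mvc (seg_V V E f v u) (seg_E V E f v u) {v, Delta E u v} \<and>
         mvc V E {u,v} + 1 = mvc (seg_V V E f u v) (seg_E V E f u v) {u, Delta E u v} + mvc (seg_V V E f v u) (seg_E V E f v u) {v, Delta E u v}"
  proof -
    from i(2) consider "u = f i \<and> v = f (Suc i mod card V)" | "u = f (Suc i mod card V) \<and> v = f i"
      by (auto simp: doubleton_eq_iff)
    thus ?thesis
    proof cases
      case 1
      thus ?thesis using wlog[OF assms(1,2,3) i(1) _ _ euv assms(6) hypn] by blast
    next
      case 2
      have W: "mvc V E {v} + 1 = mvc (seg_V V E f v u) (seg_E V E f v u) {v, Delta E v u} + mvc (seg_V V E f u v) (seg_E V E f u v) {} \<and>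
         mvc V E {u} + 1 = mvc (seg_V V E f v u) (seg_E V E f v u) {} + mvc (seg_V V E f u v) (seg_E V E f u v) {u, Delta E v u} \<and>
         mvc V E {v,u} + 1 = mvc (seg_V V E f v u) (seg_E V E f v u) {v, Delta E v u} + mvc (seg_V V E f u v) (seg_E V E f u v) {u, Delta E v u}"
        using wlog[OF assms(1,2,3) i(1) _ _ euv' assms(5) hypn'] 2 by blast
      thus ?thesis by (simp add: Delta_comm[of E v u] insert_commute)
    qed
  qed
  thus ?thesis by linarith
qed

end
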